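(* Let $p$ be a prime and $k>1$ an integer, and let $t$ be a nonnegative integer with $t\le\min\{\log((k-1)/2),\ \log(p/2)\}$. Then for any distinct $g_0,g_1\in\mathbb{Z}_p$, there is no deterministic one-round $k$-party protocol for the Sum-Distinguish problem over $\mathbb{Z}_p$ relative to $g_0,g_1$ with per-party communication complexity $t$.
   Context: Model: parties $P_1,\dots,P_k$ each hold an input $x_i\in\mathbb{Z}_p$; a coordinator (distinct from the parties) wants to compute $f(x_1,\dots,x_k)$. In a deterministic one-round protocol each party sends a single message, a function of its own input only, to the coordinator, who outputs a value depending only on the received messages; there is no other communication. A protocol has per-party communication complexity $t$ if each party always sends exactly $t$ bits. Sum-Distinguish relative to distinct $g_0,g_1\in\mathbb{Z}_p$: the partial function $f$ with $f=1$ if $\sum_i x_i\equiv g_1\pmod p$ and $f=0$ if $\sum_i x_i\equiv g_0\pmod p$ (undefined otherwise); a protocol solves it if the coordinator outputs the correct value on every input on which $f$ is defined. $\log$ is base 2. *)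

theory Defs
  imports Complex_Main "HOL-Computational_Algebra.Primes"
begin

text \<open>Parties are indexed 0..k-1; inputs of party i are residues in {0..<p} (Z_p).
  Party i's message is given by msg i :: nat \<Rightarrow> bool list (a function of its own input only);
  per-party communication complexity t means every message has exactly t bits.
  The coordinator sees only the list of the k received messages and outputs a natural number.\<close>

definition solves_sum_distinguish ::
  "nat \<Rightarrow> nat \<Rightarrow> nat \<Rightarrow> nat \<Rightarrow> nat \<Rightarrow> (nat \<Rightarrow> nat \<Rightarrow> bool list) \<Rightarrow> (bool list list \<Rightarrow> nat) \<Rightarrow> bool"
where
  "solves_sum_distinguish p k t g0 g1 msg dec \<longleftrightarrow>
     (\<forall>i<k. \<forall>x<p. length (msg i x) = t) \<and>
     (\<forall>x :: nat \<Rightarrow> nat. (\<forall>i<k. x i < p) \<longrightarrow>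
        ((\<Sum>i<k. x i) mod p = g1 \<longrightarrow> dec (map (\<lambda>i. msg i (x i)) [0..<k]) = 1) \<and>
        ((\<Sum>i<k. x i) mod p = g0 \<longrightarrow> dec (map (\<lambda>i. msg i (x i)) [0..<k]) = 0))"

end

theory Submission
  imports Defs "HOL-Number_Theory.Number_Theory"
begin

lemma f1: "(a + Suc n * d) mod p = ((a + n*d) mod p + d) mod (p::nat)"
proof -
  have "(a + Suc n * d) mod p = (a + n*d + d) mod p" by (simp add: algebra_simps)
  also have "\<dots> = ((a+n*d) mod p + d) mod p" by (simp add: mod_add_left_eq)
  finally show ?thesis .
qed
lemma f2: "p dvd (m::nat) \<Longrightarrow> 0 < m \<Longrightarrow> m < 2*p \<Longrightarrow> m = p"
  by (auto elim!: dvdE)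
lemma f3: "b < (p::nat) \<Longrightarrow> (x + (b' + p - b) mod p) mod p = (x + p - b + b') mod p"
proof -
  assume "b < p"
  have "(x + (b' + p - b) mod p) mod p = (x + (b' + p - b)) mod p" by (simp add: mod_add_right_eq)
  also have "x + (b' + p - b) = x + p - b + b'" using \<open>b < p\<close> by simp
  finally show ?thesis .
qed
lemma f4: "c < (p::nat) \<Longrightarrow> a < p \<Longrightarrow> (c + (a + p - c) mod p) mod p = a"
proof -
  assume h: "c < p" "a < p"
  have "(c + (a + p - c) mod p) mod p = (c + (a + p - c)) mod p" by (simp add: mod_add_right_eq)
  also have "c + (a + p - c) = a + p" using h by simp
  finally show ?thesis using h by simp
qed
lemma f5: "c < (p::nat) \<Longrightarrow> (c' + (a + p - c) mod p) mod p = (a + p - c + c') mod p"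
proof -
  have "(c' + (a + p - c) mod p) mod p = (c' + (a + p - c)) mod p" by (simp add: mod_add_right_eq)
  then show ?thesis by (simp add: add.commute)
qed

definition sumset :: "nat \<Rightarrow> nat set \<Rightarrow> nat set \<Rightarrow> nat set" where
  "sumset p A B = (\<lambda>(a,b). (a+b) mod p) ` (A \<times> B)"

lemma inj_shift: "inj_on (\<lambda>y. (y + e) mod p) {..<(p::nat)}"
proof (rule inj_onI)
  fix x y assume "x \<in> {..<p}" "y \<in> {..<p}" "(x + e) mod p = (y + e) mod p"
  then have "[x = y] (mod p)" using cong_add_rcancel_nat unfolding cong_def by blast
  then show "x = y" using \<open>x \<in> {..<p}\<close> \<open>y \<in> {..<p}\<close> by (simp add: cong_def)
qed

lemma invariant_full:
  fixes p :: nat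
  assumes "prime p" "A \<subseteq> {..<p}" "a \<in> A" "0 < d" "d < p"
    and inv: "\<forall>x\<in>A. (x + d) mod p \<in> A"
  shows "A = {..<p}"
proof -
  have step: "(a + n*d) mod p \<in> A" for n
  proof (induction n)
    case 0 then show ?case using assms(2,3) by auto
  next
    case (Suc n)
    have "(a + Suc n * d) mod p = ((a + n*d) mod p + d) mod p" by (rule f1)
    then show ?case using inv Suc by auto
  qed
  have "coprime d p" using assms
    by (metis coprime_commute le_less_trans less_not_refl2 nat_dvd_not_less prime_imp_coprime_nat)
  then obtain x where x: "[d*x = 1] (mod p)" using cong_solve_coprime_nat[of d p] by auto
  show ?thesis
  proof
    show "{..<p} \<subseteq> A"
    proof
      fix y assume y: "y \<in> {..<p}"
      have "[a + (x*(y + p - a))*d = a + (d*x)*(y + p - a)] (mod p)" by (simp only: mult_ac cong_refl)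
      also have "[a + (d*x)*(y + p - a) = a + 1*(y + p - a)] (mod p)"
        by (rule cong_add[OF cong_refl cong_mult[OF x cong_refl]])
      also have "a + 1*(y+p-a) = y + p" using assms(2,3) by auto
      also have "[y + p = y] (mod p)" by (simp add: cong_def)
      finally have "(a + (x*(y + p - a))*d) mod p = y" using y by (simp add: cong_def)
      then show "y \<in> A" using step[of "x*(y + p - a)"] by simp
    qed
  qed (use assms in auto)
qed

lemma cauchy_davenport:
  fixes p :: nat
  assumes "prime p"
  shows "A \<subseteq> {..<p} \<Longrightarrow> B \<subseteq> {..<p} \<Longrightarrow> A \<noteq> {} \<Longrightarrow> B \<noteq> {} \<Longrightarrow>
     min p (card A + card B - 1) \<le> card (sumset p A B)"
proof (induction "card B" arbitrary: A B rule: less_induct)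
  case less
  have finA: "finite A" using less.prems finite_subset by blast
  have finB: "finite B" using less.prems finite_subset by blast
  have fin: "finite (sumset p A B)" unfolding sumset_def using finA finB by auto
  obtain b where b: "b \<in> B" using less.prems by auto
  have cardA: "card A \<le> card (sumset p A B)"
  proof -
    have "card A = card ((\<lambda>y. (y + b) mod p) ` A)"
      using inj_on_subset[OF inj_shift less.prems(1)] by (simp add: card_image)
    also have "\<dots> \<le> card (sumset p A B)"
    proof (rule card_mono[OF fin], rule subsetI)
      fix s assume "s \<in> (\<lambda>y. (y + b) mod p) ` A"
      then obtain y where y: "y \<in> A" "s = (y + b) mod p" by auto
      then have yb: "(y, b) \<in> A \<times> B" using b by auto
      show "s \<in> sumset p A B" unfolding sumset_def
        by (rule rev_image_eqI[OF yb]) (simp add: y)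
    qed
    finally show ?thesis .
  qed
  show ?case
  proof (cases "card B = 1 \<or> card A = p")
    case True
    then show ?thesis using cardA by auto
  next
    case False
    have "card A \<le> card {..<p}" by (rule card_mono) (use less.prems in auto)
    then have cAp: "card A < p" using False by simp
    have "card B \<noteq> 1" using False by simp
    have "\<exists>b'\<in>B. b' \<noteq> b"
    proof (rule ccontr)
      assume nb: "\<not> (\<exists>b'\<in>B. b' \<noteq> b)"
      have "B = {b}" using b nb by blast
      then show False using \<open>card B \<noteq> 1\<close> by simp
    qed
    then obtain b' where b': "b' \<in> B" "b' \<noteq> b" by blast
    have "\<exists>a\<in>A. \<exists>c\<in>B. \<exists>c'\<in>B. (a + p - c + c') mod p \<notin> A"
    proof (rule ccontr)
      assume "\<not> ?thesis"
      then have H: "\<forall>a\<in>A. (a + p - b + b') mod p \<in> A" using b b' by blast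
      define d where "d = (b' + p - b) mod p"
      have bp: "b < p" "b' < p" using b b' less.prems by auto
      have "d \<noteq> 0"
      proof
        assume "d = 0"
        then have "p dvd (b' + p - b)" unfolding d_def by auto
        moreover have "0 < b' + p - b" "b' + p - b < 2*p" using bp by auto
        ultimately have "b' + p - b = p"
          by (rule f2)
        then show False using b' bp by auto
      qed
      have dp: "d < p" unfolding d_def using bp by auto
      have "\<forall>x\<in>A. (x + d) mod p \<in> A"
      proof
        fix x assume "x \<in> A"
        have "x < p" using \<open>x \<in> A\<close> less.prems by auto
        have "(x + d) mod p = (x + p - b + b') mod p" unfolding d_def using bp(1)
          by (rule f3)
        then show "(x + d) mod p \<in> A" using H \<open>x \<in> A\<close> by simp
      qed
      then have "A = {..<p}" using invariant_full[OF assms less.prems(1) _ _ dp] \<open>d \<noteq> 0\<close> less.prems(3)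
        by blast
      then show False using cAp by simp
    qed
    then obtain a c c' where acc: "a \<in> A" "c \<in> B" "c' \<in> B" "(a + p - c + c') mod p \<notin> A" by blast
    define e where "e = (a + p - c) mod p"
    define A' where "A' = A \<union> (\<lambda>y. (y + e) mod p) ` B"
    define B' where "B' = {y \<in> B. (y + e) mod p \<in> A}"
    have ap: "a < p" "c < p" "c' < p" using acc less.prems by auto
    have ce: "(c + e) mod p = a" unfolding e_def using ap
      by (intro f4)
    have c'e: "(c' + e) mod p \<notin> A" using acc(4) f5[OF ap(2)] unfolding e_def
      by simp
    have B'sub: "B' \<subset> B" using acc c'e unfolding B'_def by auto
    have cB': "c \<in> B'" using acc ce unfolding B'_def by auto
    have finB': "finite B'" using finB B'sub finite_subset by blast
    have lt: "card B' < card B" using B'sub finB by (simp add: psubset_card_mono)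
    have A'sub: "A' \<subseteq> {..<p}" using less.prems(1) unfolding A'_def
      using ap by auto
    have IH: "min p (card A' + card B' - 1) \<le> card (sumset p A' B')"
      using less.hyps[OF lt A'sub] B'sub less.prems cB' unfolding A'_def by auto
    have sub: "sumset p A' B' \<subseteq> sumset p A B"
    proof
      fix s assume "s \<in> sumset p A' B'"
      then obtain x y where xy: "x \<in> A'" "y \<in> B'" "s = (x + y) mod p" unfolding sumset_def by auto
      show "s \<in> sumset p A B"
      proof (cases "x \<in> A")
        case True then show ?thesis using xy B'sub unfolding sumset_def by auto
      next
        case False
        then obtain z where z: "z \<in> B" "x = (z + e) mod p" using xy unfolding A'_def by auto
        have "s = (z + (y + e) mod p) mod p" using xy z
          by (simp add: mod_add_left_eq mod_add_right_eq algebra_simps)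
        also have "\<dots> = ((y + e) mod p + z) mod p" by (simp add: add.commute)
        finally show ?thesis using z xy unfolding B'_def sumset_def by auto
      qed
    qed
    have cardA': "card A' = card A + (card B - card B')"
    proof -
      have "A' = A \<union> ((\<lambda>y. (y + e) mod p) ` (B - B'))" unfolding A'_def B'_def by auto
      moreover have "A \<inter> ((\<lambda>y. (y + e) mod p) ` (B - B')) = {}" unfolding B'_def by auto
      moreover have "card ((\<lambda>y. (y + e) mod p) ` (B - B')) = card (B - B')"
        using inj_on_subset[OF inj_shift] less.prems(2) by (intro card_image) (meson Diff_subset inj_on_subset inj_shift subset_trans)
      moreover have "card (B - B') = card B - card B'" using B'sub finB by (simp add: card_Diff_subset finB')
      ultimately show ?thesis using finA finB by (simp add: card_Un_disjoint)
    qed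
    have "card B' \<le> card B" using lt by simp
    then have "card A' + card B' = card A + card B" using cardA' by simp
    then show ?thesis using IH card_mono[OF fin sub] by simp
  qed
qed


lemma pigeon:
  assumes "finite A" "A \<noteq> {}" "f ` A \<subseteq> L" "finite L" "card L \<le> N"
  shows "\<exists>m. card A \<le> card {x\<in>A. f x = m} * N"
proof (rule ccontr)
  assume "\<not> ?thesis"
  then have lt: "\<And>m. card {x\<in>A. f x = m} * N < card A" by (simp add: not_le)
  have eqA: "A = (\<Union>m\<in>f ` A. {x\<in>A. f x = m})" by auto
  have "card (\<Union>m\<in>f ` A. {x\<in>A. f x = m}) = (\<Sum>m\<in>f ` A. card {x\<in>A. f x = m})"
    by (rule card_UN_disjoint) (use assms(1) in auto)
  then have "card A = (\<Sum>m\<in>f ` A. card {x\<in>A. f x = m})" using eqA by simp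
  then have "card A * N = (\<Sum>m\<in>f ` A. card {x\<in>A. f x = m} * N)"
    by (simp add: sum_distrib_right)
  also have "\<dots> < (\<Sum>m\<in>f ` A. card A)"
    using assms(1,2) by (intro sum_strict_mono) (auto intro: lt)
  also have "\<dots> = card (f ` A) * card A" by simp
  also have "\<dots> \<le> N * card A"
    using card_mono[OF assms(4,3)] assms(5) by (intro mult_right_mono) auto
  finally show False by (simp add: mult.commute)
qed

lemma minarith: "min p (1+S) \<le> (a::nat) \<Longrightarrow> 1 \<le> c \<Longrightarrow> min p (1 + S + (c - 1)) \<le> min p (a + c - 1)"
  by (auto simp: min_def split: if_splits)

fun SS :: "nat \<Rightarrow> (nat \<Rightarrow> nat set) \<Rightarrow> nat \<Rightarrow> nat set" where
  "SS p C 0 = {0}"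
| "SS p C (Suc j) = sumset p (SS p C j) (C j)"

lemma SS_props:
  fixes p :: nat
  assumes "prime p" "\<forall>i<j. C i \<subseteq> {..<p} \<and> C i \<noteq> {}"
  shows "SS p C j \<subseteq> {..<p} \<and> SS p C j \<noteq> {} \<and>
         min p (1 + (\<Sum>i<j. card (C i) - 1)) \<le> card (SS p C j)"
  using assms(2)
proof (induction j)
  case 0
  have "0 < p" using assms(1) prime_gt_0_nat by blast
  then show ?case by simp
next
  case (Suc j)
  have p0: "0 < p" using assms(1) prime_gt_0_nat by blast
  have IH: "SS p C j \<subseteq> {..<p}" "SS p C j \<noteq> {}"
    "min p (1 + (\<Sum>i<j. card (C i) - 1)) \<le> card (SS p C j)"
    using Suc by auto
  have Cj: "C j \<subseteq> {..<p}" "C j \<noteq> {}" using Suc.prems by auto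
  have finC: "finite (C j)" using Cj finite_subset by blast
  have c1: "1 \<le> card (C j)" using Cj finC by (simp add: Suc_le_eq card_gt_0_iff)
  have sub: "SS p C (Suc j) \<subseteq> {..<p}" using p0 by (auto simp: sumset_def)
  have ne: "SS p C (Suc j) \<noteq> {}" using IH Cj by (auto simp: sumset_def)
  have cd: "min p (card (SS p C j) + card (C j) - 1) \<le> card (SS p C (Suc j))"
    using cauchy_davenport[OF assms(1) IH(1) Cj(1) IH(2) Cj(2)] by simp
  have "min p (1 + (\<Sum>i<Suc j. card (C i) - 1)) \<le> min p (card (SS p C j) + card (C j) - 1)"
    using minarith[OF IH(3) c1] by simp
  then show ?case using sub ne cd by linarith
qed

lemma SS_mem:
  fixes p :: nat
  shows "g \<in> SS p C j \<Longrightarrow> \<exists>x. (\<forall>i<j. x i \<in> C i) \<and> (\<Sum>i<j. x i) mod p = g"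
proof (induction j arbitrary: g)
  case 0
  then show ?case by (intro exI[of _ "\<lambda>_. 0"]) simp
next
  case (Suc j)
  then obtain a c where ac: "a \<in> SS p C j" "c \<in> C j" "g = (a + c) mod p"
    by (auto simp: sumset_def)
  obtain x where x: "\<forall>i<j. x i \<in> C i" "(\<Sum>i<j. x i) mod p = a" using Suc.IH[OF ac(1)] by blast
  define x' where "x' = x(j := c)"
  have "(\<Sum>i<j. x' i) = (\<Sum>i<j. x i)" unfolding x'_def by (intro sum.cong) auto
  then have s: "(\<Sum>i<Suc j. x' i) = (\<Sum>i<j. x i) + c" unfolding x'_def by simp
  have "(\<Sum>i<Suc j. x' i) mod p = g" unfolding s ac(3) x(2)[symmetric] by (simp add: mod_add_left_eq)
  moreover have "\<forall>i<Suc j. x' i \<in> C i" using x ac unfolding x'_def by (auto simp: less_Suc_eq)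
  ultimately show ?case by blast
qed

lemma card_msgs: "card {xs :: bool list. length xs = t} = 2 ^ t"
  using card_lists_length_eq[of "UNIV :: bool set" t] by simp

lemma fin_msgs: "finite {xs :: bool list. length xs = t}"
  using finite_lists_length_eq[of "UNIV :: bool set" t] by simp

lemma arith_key:
  fixes M q k p :: nat
  assumes "p \<le> M * (q + 1)" "2 * M \<le> p" "2 * M + 1 \<le> k"
  shows "p - 1 \<le> k * q"
proof -
  have a: "M * (q + 1) = M * q + M" by simp
  have b: "(2 * M + 1) * q \<le> k * q" using assms(3) by (rule mult_right_mono) simp
  have c: "(2 * M + 1) * q = 2 * (M * q) + q" by (simp add: algebra_simps)
  show ?thesis using assms(1,2) a b c by linarith
qed

theorem theorem3p4:
  fixes p k t g0 g1 :: nat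
  assumes "prime p" and "k > 1"
    and "real t \<le> log 2 ((real k - 1) / 2)" and "real t \<le> log 2 (real p / 2)"
    and "g0 < p" and "g1 < p" and "g0 \<noteq> g1"
  shows "\<not> (\<exists>msg dec. solves_sum_distinguish p k t g0 g1 msg dec)"
proof
  assume "\<exists>msg dec. solves_sum_distinguish p k t g0 g1 msg dec"
  then obtain msg dec where sol: "solves_sum_distinguish p k t g0 g1 msg dec" by blast
  have len: "\<forall>i<k. \<forall>x<p. length (msg i x) = t"
    and corr: "\<And>x. (\<forall>i<k. x i < p) \<Longrightarrow>
        ((\<Sum>i<k. x i) mod p = g1 \<longrightarrow> dec (map (\<lambda>i. msg i (x i)) [0..<k]) = 1) \<and>
        ((\<Sum>i<k. x i) mod p = g0 \<longrightarrow> dec (map (\<lambda>i. msg i (x i)) [0..<k]) = 0)"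
    using sol unfolding solves_sum_distinguish_def by blast+
  define M :: nat where "M = 2 ^ t"
  have p0: "0 < p" using assms(1) prime_gt_0_nat by blast
  have "real k - 1 > 0" using assms(2) by simp
  then have "2 powr real t \<le> (real k - 1) / 2" using assms(3) by (subst le_log_iff[symmetric]) auto
  then have "real M \<le> (real k - 1) / 2" unfolding M_def by (simp add: powr_realpow)
  then have "real (2 * M + 1) \<le> real k" by simp
  then have kM: "2 * M + 1 \<le> k" by (simp only: of_nat_le_iff)
  have "2 powr real t \<le> real p / 2" using assms(4) p0 by (subst le_log_iff[symmetric]) auto
  then have "real M \<le> real p / 2" unfolding M_def by (simp add: powr_realpow)
  then have "real (2 * M) \<le> real p" by simp
  then have pM: "2 * M \<le> p" by (simp only: of_nat_le_iff)
  have M0: "0 < M" unfolding M_def by simp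
  have "\<forall>i<k. \<exists>m. p \<le> card {x\<in>{..<p}. msg i x = m} * M"
  proof (intro allI impI)
    fix i assume "i < k"
    have "\<exists>m. card {..<p} \<le> card {x\<in>{..<p}. msg i x = m} * M"
      by (rule pigeon[where L="{xs. length xs = t}"])
         (use p0 len \<open>i < k\<close> fin_msgs card_msgs M_def in auto)
    then show "\<exists>m. p \<le> card {x\<in>{..<p}. msg i x = m} * M" by simp
  qed
  then obtain m where m: "\<And>i. i < k \<Longrightarrow> p \<le> card {x\<in>{..<p}. msg i x = m i} * M"
    by metis
  define C where "C i = {x\<in>{..<p}. msg i x = m i}" for i
  have Csub: "C i \<subseteq> {..<p}" for i unfolding C_def by auto
  have Cbig: "p \<le> card (C i) * M" if "i < k" for i using m[OF that] unfolding C_def .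
  have C2: "1 \<le> card (C i)" if "i < k" for i
  proof (rule ccontr)
    assume "\<not> 1 \<le> card (C i)"
    then have "card (C i) = 0" by simp
    then show False using Cbig[OF that] p0 by simp
  qed
  have Cne: "C i \<noteq> {}" if "i < k" for i using C2[OF that] by auto
  have each: "p - 1 \<le> k * (card (C i) - 1)" if "i < k" for i
    using arith_key[of p M "card (C i) - 1" k] Cbig[OF that] C2[OF that] pM kM by (simp add: mult.commute)
  have "k * (p - 1) = (\<Sum>i<k. p - 1)" by simp
  also have "\<dots> \<le> (\<Sum>i<k. k * (card (C i) - 1))" by (intro sum_mono each) simp
  also have "\<dots> = k * (\<Sum>i<k. card (C i) - 1)" by (simp add: sum_distrib_left)
  finally have "p - 1 \<le> (\<Sum>i<k. card (C i) - 1)" using assms(2) by simp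
  then have "p \<le> 1 + (\<Sum>i<k. card (C i) - 1)" by linarith
  moreover have SSk: "SS p C k \<subseteq> {..<p} \<and> SS p C k \<noteq> {} \<and>
         min p (1 + (\<Sum>i<k. card (C i) - 1)) \<le> card (SS p C k)"
    using SS_props[OF assms(1)] Csub Cne by blast
  ultimately have "card {..<p} \<le> card (SS p C k)" by simp
  then have full: "SS p C k = {..<p}" using SSk card_seteq[of "{..<p}" "SS p C k"] by auto
  obtain x0 where x0: "\<forall>i<k. x0 i \<in> C i" "(\<Sum>i<k. x0 i) mod p = g0"
    using SS_mem[of g0 p C k] full assms(5) by auto
  obtain x1 where x1: "\<forall>i<k. x1 i \<in> C i" "(\<Sum>i<k. x1 i) mod p = g1"
    using SS_mem[of g1 p C k] full assms(6) by auto
  have x0p: "\<forall>i<k. x0 i < p" using x0 unfolding C_def by auto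
  have x1p: "\<forall>i<k. x1 i < p" using x1 unfolding C_def by auto
  have "map (\<lambda>i. msg i (x0 i)) [0..<k] = map (\<lambda>i. msg i (x1 i)) [0..<k]"
    using x0 x1 unfolding C_def by (intro map_cong) auto
  moreover have "dec (map (\<lambda>i. msg i (x0 i)) [0..<k]) = 0" using corr[OF x0p] x0(2) by blast
  moreover have "dec (map (\<lambda>i. msg i (x1 i)) [0..<k]) = 1" using corr[OF x1p] x1(2) by blast
  ultimately show False by (metis zero_neq_one)
qed

end
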